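(* Assume $b$ satisfies condition (Cb) for some $\rho\in\mathscr U$ and let $\ell\in\mathbb S^d$. Let $\phi$ be a nonnegative $C^\infty$ function on $\mathbb R^d$ supported in the unit ball with $\int\phi=1$, $\phi_\varepsilon(x):=\varepsilon^{-d}\phi(x/\varepsilon)$, and $b_\varepsilon:=b*\phi_\varepsilon$ for $\varepsilon\in(0,1)$. Then each $b_\varepsilon$ satisfies (Cb) with the same $\rho$, and if $X^\varepsilon_t$ and $X^\ell_t$ solve $X^\varepsilon_t=x_0+\int_0^tb_\varepsilon(X^\varepsilon_s)ds+W_{\ell(t)}$ and $X^\ell_t=x_0+\int_0^tb(X^\ell_s)ds+W_{\ell(t)}$ (driven by the same $W$), then for every $\omega$ and every $t\ge0$, $\lim_{\varepsilon\downarrow0}|X^\varepsilon_t(\omega)-X^\ell_t(\omega)|=0$.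
   Context: Notation: $\|x\|_1:=\sum_j|x_j|$. $\mathscr U$ is the set of continuous non-decreasing functions $\rho:(0,\infty)\to(0,\infty)$ with at most linear growth such that $\int_{0+}\frac{1}{\rho(s)}\,ds=+\infty$. Condition (Cb): $b:\mathbb R^d\to\mathbb R^d$ is continuous and $(x_j-y_j)(b_j(x)-b_j(y))\le|x_j-y_j|\rho(\|x-y\|_1)$ for all $x,y\in\mathbb R^d$, $j=1,\dots,d$. $\mathbb S^d$ is the set of càdlàg $\ell=(\ell_1,\dots,\ell_d):[0,\infty)\to[0,\infty)^d$ with each $\ell_j$ non-decreasing and $\ell_j(0)=0$. $W$ is a standard $d$-dimensional Brownian motion and $W_{\ell(t)}:=(W^1_{\ell_1(t)},\dots,W^d_{\ell_d(t)})$. *)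

theory Defs
  imports "HOL-Analysis.Analysis" "HOL-Probability.Probability"
begin

definition l1norm :: "real^'d \<Rightarrow> real" where
  "l1norm x = (\<Sum>j\<in>UNIV. \<bar>x $ j\<bar>)"

definition osgood_class :: "(real \<Rightarrow> real) \<Rightarrow> bool" where
  "osgood_class \<rho> \<longleftrightarrow>
     continuous_on {0<..} \<rho> \<and> mono_on {0<..} \<rho> \<and> (\<forall>s>0. \<rho> s > 0) \<and>
     (\<exists>C. \<forall>s>0. \<rho> s \<le> C * (1 + s)) \<and>
     filterlim (\<lambda>e. integral {e..1} (\<lambda>s. 1 / \<rho> s)) at_top (at_right 0)"

definition cond_Cb :: "(real \<Rightarrow> real) \<Rightarrow> (real^'d \<Rightarrow> real^'d) \<Rightarrow> bool" where
  "cond_Cb \<rho> b \<longleftrightarrow> continuous_on UNIV b \<and>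
     (\<forall>x y j. (x $ j - y $ j) * (b x $ j - b y $ j) \<le> \<bar>x $ j - y $ j\<bar> * \<rho> (l1norm (x - y)))"

definition subord_paths :: "(real \<Rightarrow> real^'d) set" where
  "subord_paths = {l. l 0 = 0 \<and> (\<forall>t\<ge>0. \<forall>j. l t $ j \<ge> 0) \<and>
     (\<forall>j. mono_on {0..} (\<lambda>t. l t $ j)) \<and>
     (\<forall>t\<ge>0. continuous (at_right t) l) \<and>
     (\<forall>t>0. \<exists>L. (l \<longlongrightarrow> L) (at_left t))}"

definition std_brownian_motion :: "'w measure \<Rightarrow> ('w \<Rightarrow> real \<Rightarrow> real^'d) \<Rightarrow> bool" where
  "std_brownian_motion M W \<longleftrightarrow> prob_space M \<and>
     (\<forall>t\<ge>0. (\<lambda>\<omega>. W \<omega> t) \<in> borel_measurable M) \<and>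
     (\<forall>\<omega>\<in>space M. W \<omega> 0 = 0 \<and> continuous_on {0..} (W \<omega>)) \<and>
     (\<forall>ts :: real list. sorted ts \<and> (\<forall>t\<in>set ts. t \<ge> 0) \<longrightarrow>
        prob_space.indep_vars M (\<lambda>_. borel)
          (\<lambda>i \<omega>. W \<omega> (ts ! Suc i) - W \<omega> (ts ! i)) {..<length ts - 1}) \<and>
     (\<forall>s t. 0 \<le> s \<and> s < t \<longrightarrow>
        prob_space.indep_vars M (\<lambda>_. borel) (\<lambda>j \<omega>. (W \<omega> t - W \<omega> s) $ j) UNIV \<and>
        (\<forall>j. distributed M lborel (\<lambda>\<omega>. (W \<omega> t - W \<omega> s) $ j)
                (\<lambda>x. ennreal (normal_density 0 (sqrt (t - s)) x))))"

text \<open>Time-changed Brownian motion W_{l(t)} = (W^1_{l_1(t)},...,W^d_{l_d(t)}).\<close>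
definition time_changed :: "('w \<Rightarrow> real \<Rightarrow> real^'d) \<Rightarrow> (real \<Rightarrow> real^'d) \<Rightarrow> 'w \<Rightarrow> real \<Rightarrow> real^'d" where
  "time_changed W l \<omega> t = (\<chi> j. W \<omega> (l t $ j) $ j)"

text \<open>C-infinity: continuous partial derivatives of all orders exist.
  D js is the iterated partial derivative along the directions in js.\<close>
definition smooth_fun :: "(real^'d \<Rightarrow> real) \<Rightarrow> bool" where
  "smooth_fun f \<longleftrightarrow> (\<exists>D :: 'd list \<Rightarrow> real^'d \<Rightarrow> real. D [] = f \<and>
     (\<forall>js. continuous_on UNIV (D js)) \<and>
     (\<forall>js j x. ((\<lambda>h. D js (x + h *\<^sub>R axis j 1)) has_real_derivative D (j # js) x) (at 0)))"

definition mollifier :: "(real^'d \<Rightarrow> real) \<Rightarrow> real \<Rightarrow> real^'d \<Rightarrow> real" where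
  "mollifier \<phi> \<epsilon> x = inverse \<epsilon> ^ CARD('d) * \<phi> (inverse \<epsilon> *\<^sub>R x)"

definition mollify :: "(real^'d \<Rightarrow> real^'d) \<Rightarrow> (real^'d \<Rightarrow> real) \<Rightarrow> real \<Rightarrow> real^'d \<Rightarrow> real^'d" where
  "mollify b \<phi> \<epsilon> x = integral UNIV (\<lambda>y. mollifier \<phi> \<epsilon> y *\<^sub>R b (x - y))"

end

theory Submission
  imports Defs
begin

lemma norm_in_cbox:
  fixes x :: "'a::euclidean_space"
  assumes "norm x \<le> r"
  shows "x \<in> cbox (-(r *\<^sub>R One)) (r *\<^sub>R One)"
  using assms Basis_le_norm[of _ x] unfolding mem_box
proof (intro ballI conjI)
  fix i :: 'a assume i: "i \<in> Basis"
  have o: "One \<bullet> i = 1" using i by (simp add: inner_sum_left inner_Basis)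
  have "\<bar>x \<bullet> i\<bar> \<le> r" using Basis_le_norm[OF i, of x] assms by linarith
  thus "(- (r *\<^sub>R One)) \<bullet> i \<le> x \<bullet> i" "x \<bullet> i \<le> (r *\<^sub>R One) \<bullet> i" using o by (auto simp: abs_le_iff)
qed

lemma mollifier_zero:
  assumes "\<epsilon> > 0" "\<forall>x. norm x > 1 \<longrightarrow> \<phi> x = 0" "norm y > \<epsilon>"
  shows "mollifier \<phi> \<epsilon> y = 0"
proof -
  have "norm (inverse \<epsilon> *\<^sub>R y) > 1" using assms by (simp add: field_simps)
  thus ?thesis using assms unfolding mollifier_def by simp
qed

lemma mollifier_cont:
  assumes "continuous_on UNIV \<phi>"
  shows "continuous_on UNIV (mollifier \<phi> \<epsilon>)"
  unfolding mollifier_def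
  by (intro continuous_intros continuous_on_compose2[OF assms]) auto

lemma mollifier_int:
  fixes \<phi> :: "real^'d \<Rightarrow> real"
  assumes "\<epsilon> > 0" "\<forall>x. norm x > 1 \<longrightarrow> \<phi> x = 0" "(\<phi> has_integral 1) UNIV"
  shows "(mollifier \<phi> \<epsilon> has_integral 1) UNIV"
proof -
  have sub: "\<And>r x. norm (x::real^'d) \<le> r \<Longrightarrow> x \<in> cbox (-(r *\<^sub>R One)) (r *\<^sub>R One)"
    by (rule norm_in_cbox)
  have "(\<phi> has_integral 1) (cbox (-(1 *\<^sub>R One)) (1 *\<^sub>R One))"
  proof -
    have "(\<lambda>x. if x \<in> cbox (-(1 *\<^sub>R One)) (1 *\<^sub>R One) then \<phi> x else 0) = \<phi>"
      using sub[of _ 1] assms(2) by (force simp: not_le)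
    thus ?thesis using assms(3) has_integral_restrict_UNIV[of "cbox (-(1 *\<^sub>R One)) (1 *\<^sub>R One)" \<phi> 1]
      by simp
  qed
  from has_integral_affinity'[OF this, of "inverse \<epsilon>" 0]
  have "((\<lambda>x. \<phi> (inverse \<epsilon> *\<^sub>R x)) has_integral (1 /\<^sub>R inverse \<epsilon> ^ CARD('d)))
     (cbox ((-(1 *\<^sub>R One) - 0) /\<^sub>R inverse \<epsilon>) ((1 *\<^sub>R One - 0) /\<^sub>R inverse \<epsilon>))"
    using assms by simp
  note aff = this
  have "(mollifier \<phi> \<epsilon> has_integral 1) (cbox ((-(1 *\<^sub>R One) - 0) /\<^sub>R inverse \<epsilon>) ((1 *\<^sub>R One - 0) /\<^sub>R inverse \<epsilon>))"
    unfolding mollifier_def using has_integral_mult_right[OF aff, of "inverse \<epsilon> ^ CARD('d)"] assms(1)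
    by (simp add: field_simps)
  moreover have "cbox ((-(1 *\<^sub>R One) - 0) /\<^sub>R inverse \<epsilon>) ((1 *\<^sub>R One - 0) /\<^sub>R inverse \<epsilon>)
     = cbox (-(\<epsilon> *\<^sub>R One)) (\<epsilon> *\<^sub>R One)" by simp
  ultimately have h: "(mollifier \<phi> \<epsilon> has_integral 1) (cbox (-(\<epsilon> *\<^sub>R One)) (\<epsilon> *\<^sub>R One))" by simp
  show ?thesis
    by (rule has_integral_on_superset[OF h]) (use sub[of _ \<epsilon>] mollifier_zero[OF assms(1,2)] in \<open>force simp: not_le\<close>)+
qed

definition moll_ok :: "(real^'d \<Rightarrow> real) \<Rightarrow> bool" where
  "moll_ok \<phi> \<longleftrightarrow> continuous_on UNIV \<phi> \<and> (\<forall>x. \<phi> x \<ge> 0) \<and> (\<forall>x. norm x > 1 \<longrightarrow> \<phi> x = 0)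
     \<and> (\<phi> has_integral 1) UNIV"

lemma moll_integrable:
  fixes g :: "real^'d \<Rightarrow> 'b::euclidean_space"
  assumes "moll_ok \<phi>" "\<epsilon> > 0" "continuous_on UNIV g"
  shows "(\<lambda>z. mollifier \<phi> \<epsilon> z *\<^sub>R g z) integrable_on UNIV"
proof -
  have c: "continuous_on UNIV (\<lambda>z. mollifier \<phi> \<epsilon> z *\<^sub>R g z)"
    using assms mollifier_cont[of \<phi> \<epsilon>] unfolding moll_ok_def
    by (intro continuous_intros) auto
  have i: "(\<lambda>z. mollifier \<phi> \<epsilon> z *\<^sub>R g z) integrable_on cbox (-(\<epsilon> *\<^sub>R One)) (\<epsilon> *\<^sub>R One)"
    by (rule integrable_continuous) (rule continuous_on_subset[OF c], simp)
  show ?thesis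
  proof (rule integrable_on_superset[OF i])
    fix x :: "real^'d" assume "x \<notin> cbox (-(\<epsilon> *\<^sub>R One)) (\<epsilon> *\<^sub>R One)"
    hence "norm x > \<epsilon>" using norm_in_cbox[of x \<epsilon>] by force
    hence "mollifier \<phi> \<epsilon> x = 0" using mollifier_zero[OF assms(2), of \<phi> x] assms(1) by (simp add: moll_ok_def)
    thus "mollifier \<phi> \<epsilon> x *\<^sub>R g x = 0" by simp
  qed simp
qed

lemma moll_bound:
  fixes g :: "real^'d \<Rightarrow> 'b::euclidean_space"
  assumes ok: "moll_ok \<phi>" and e: "\<epsilon> > 0" and g: "continuous_on UNIV g"
    and bd: "\<And>z. norm z \<le> \<epsilon> \<Longrightarrow> norm (g z) \<le> \<kappa>"
  shows "norm (integral UNIV (\<lambda>z. mollifier \<phi> \<epsilon> z *\<^sub>R g z)) \<le> \<kappa>"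
proof -
  have mi: "(mollifier \<phi> \<epsilon> has_integral 1) UNIV"
    using ok e mollifier_int[of \<epsilon> \<phi>] unfolding moll_ok_def by auto
  have mk: "((\<lambda>z. mollifier \<phi> \<epsilon> z * \<kappa>) has_integral \<kappa>) UNIV"
    using has_integral_mult_left[OF mi, of \<kappa>] by simp
  have nn: "mollifier \<phi> \<epsilon> z \<ge> 0" for z
    using ok e unfolding moll_ok_def mollifier_def by auto
  have "norm (integral UNIV (\<lambda>z. mollifier \<phi> \<epsilon> z *\<^sub>R g z)) \<le> integral UNIV (\<lambda>z. mollifier \<phi> \<epsilon> z * \<kappa>)"
  proof (rule integral_norm_bound_integral)
    show "(\<lambda>z. mollifier \<phi> \<epsilon> z *\<^sub>R g z) integrable_on UNIV" by (rule moll_integrable[OF ok e g])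
    show "(\<lambda>z. mollifier \<phi> \<epsilon> z * \<kappa>) integrable_on UNIV" using mk by blast
    fix z :: "real^'d"
    show "norm (mollifier \<phi> \<epsilon> z *\<^sub>R g z) \<le> mollifier \<phi> \<epsilon> z * \<kappa>"
    proof (cases "norm z \<le> \<epsilon>")
      case True thus ?thesis using bd[OF True] nn[of z] by (simp add: mult_left_mono)
    next
      case False thus ?thesis using mollifier_zero[OF e, of \<phi> z] ok by (simp add: moll_ok_def)
    qed
  qed
  also have "\<dots> = \<kappa>" by (rule integral_unique[OF mk])
  finally show ?thesis .
qed

lemma mollify_diff:
  fixes b :: "real^'d \<Rightarrow> 'b::euclidean_space"
  assumes ok: "moll_ok \<phi>" and e: "\<epsilon> > 0" and b: "continuous_on UNIV b" and b': "continuous_on UNIV b'"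
  shows "integral UNIV (\<lambda>z. mollifier \<phi> \<epsilon> z *\<^sub>R b z) - integral UNIV (\<lambda>z. mollifier \<phi> \<epsilon> z *\<^sub>R b' z)
     = integral UNIV (\<lambda>z. mollifier \<phi> \<epsilon> z *\<^sub>R (b z - b' z))"
proof -
  have "((\<lambda>z. mollifier \<phi> \<epsilon> z *\<^sub>R b z - mollifier \<phi> \<epsilon> z *\<^sub>R b' z) has_integral
     (integral UNIV (\<lambda>z. mollifier \<phi> \<epsilon> z *\<^sub>R b z) - integral UNIV (\<lambda>z. mollifier \<phi> \<epsilon> z *\<^sub>R b' z))) UNIV"
    by (intro has_integral_diff integrable_integral moll_integrable[OF ok e] b b')
  thus ?thesis by (simp add: integral_unique scaleR_diff_right)
qed

lemma mollify_minus_self: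
  fixes b :: "real^'d \<Rightarrow> real^'d"
  assumes ok: "moll_ok \<phi>" and e: "\<epsilon> > 0" and b: "continuous_on UNIV b"
  shows "mollify b \<phi> \<epsilon> x - b x = integral UNIV (\<lambda>z. mollifier \<phi> \<epsilon> z *\<^sub>R (b (x - z) - b x))"
proof -
  have mi: "(mollifier \<phi> \<epsilon> has_integral 1) UNIV"
    using ok e mollifier_int[of \<epsilon> \<phi>] unfolding moll_ok_def by auto
  have "integral UNIV (\<lambda>z. mollifier \<phi> \<epsilon> z *\<^sub>R b x) = b x"
    using has_integral_scaleR_left[OF mi, of "b x"] by (simp add: integral_unique)
  moreover have "continuous_on UNIV (\<lambda>z. b (x - z))"
    by (intro continuous_on_compose2[OF b] continuous_intros) auto
  ultimately show ?thesis unfolding mollify_def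
    using mollify_diff[OF ok e, of "\<lambda>z. b (x - z)" "\<lambda>z. b x"] by auto
qed

lemma mollify_cont:
  fixes b :: "real^'d \<Rightarrow> real^'d"
  assumes ok: "moll_ok \<phi>" and e: "\<epsilon> > 0" and b: "continuous_on UNIV b"
  shows "continuous_on UNIV (mollify b \<phi> \<epsilon>)"
  unfolding continuous_on_iff
proof (intro ballI allI impI)
  fix x :: "real^'d" and r :: real assume r: "r > 0"
  have "uniformly_continuous_on (cball x (\<epsilon> + 1)) b"
    by (rule compact_uniformly_continuous) (auto intro: continuous_on_subset[OF b])
  then obtain d where d: "d > 0" and
     dd: "\<And>u v. u \<in> cball x (\<epsilon>+1) \<Longrightarrow> v \<in> cball x (\<epsilon>+1) \<Longrightarrow> dist v u < d \<Longrightarrow> dist (b v) (b u) < r/2"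
    unfolding uniformly_continuous_on_def using r by (metis half_gt_zero)
  show "\<exists>d>0. \<forall>x'\<in>UNIV. dist x' x < d \<longrightarrow> dist (mollify b \<phi> \<epsilon> x') (mollify b \<phi> \<epsilon> x) < r"
  proof (intro exI[of _ "min d 1"] conjI ballI impI)
    show "min d 1 > 0" using d by simp
    fix x' :: "real^'d" assume x': "dist x' x < min d 1"
    have cx': "continuous_on UNIV (\<lambda>z. b (x' - z))" "continuous_on UNIV (\<lambda>z. b (x - z))"
      by (intro continuous_on_compose2[OF b] continuous_intros; auto)+
    have "mollify b \<phi> \<epsilon> x' - mollify b \<phi> \<epsilon> x = integral UNIV (\<lambda>z. mollifier \<phi> \<epsilon> z *\<^sub>R (b (x' - z) - b (x - z)))"
      unfolding mollify_def by (rule mollify_diff[OF ok e cx'])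
    also have "norm \<dots> \<le> r/2"
    proof (rule moll_bound[OF ok e])
      show "continuous_on UNIV (\<lambda>z. b (x' - z) - b (x - z))" using cx' by (intro continuous_intros)
      fix z :: "real^'d" assume z: "norm z \<le> \<epsilon>"
      have "x' - z \<in> cball x (\<epsilon>+1)" "x - z \<in> cball x (\<epsilon>+1)" using z x'
      proof -
        have "norm (x - (x' - z)) \<le> norm (x - x') + norm z"
          using norm_triangle_ineq[of "x - x'" z] by (simp add: algebra_simps)
        thus "x' - z \<in> cball x (\<epsilon>+1)" using z x' by (auto simp: dist_norm norm_minus_commute)
        show "x - z \<in> cball x (\<epsilon>+1)" using z by (auto simp: dist_norm)
      qed
      moreover have "dist (x' - z) (x - z) < d" using x' by (simp add: dist_norm)
      ultimately have "dist (b (x' - z)) (b (x - z)) < r/2" using dd by blast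
      thus "norm (b (x' - z) - b (x - z)) \<le> r/2" by (simp add: dist_norm)
    qed
    finally show "dist (mollify b \<phi> \<epsilon> x') (mollify b \<phi> \<epsilon> x) < r" using r by (simp add: dist_norm)
  qed
qed

lemma mollify_unif:
  fixes b :: "real^'d \<Rightarrow> real^'d"
  assumes ok: "moll_ok \<phi>" and b: "continuous_on UNIV b" and k: "\<kappa> > 0"
  shows "\<exists>e0>0. \<forall>\<epsilon>. 0 < \<epsilon> \<and> \<epsilon> < e0 \<longrightarrow> (\<forall>x. norm x \<le> R \<longrightarrow> norm (mollify b \<phi> \<epsilon> x - b x) \<le> \<kappa>)"
proof -
  have "uniformly_continuous_on (cball 0 (\<bar>R\<bar> + 1)) b"
    by (rule compact_uniformly_continuous) (auto intro: continuous_on_subset[OF b])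
  then obtain d where d: "d > 0" and
     dd: "\<And>u v. u \<in> cball 0 (\<bar>R\<bar>+1) \<Longrightarrow> v \<in> cball 0 (\<bar>R\<bar>+1) \<Longrightarrow> dist v u < d \<Longrightarrow> dist (b v) (b u) < \<kappa>"
    unfolding uniformly_continuous_on_def using k by metis
  show ?thesis
  proof (intro exI[of _ "min d 1"] conjI allI impI)
    show "min d 1 > 0" using d by simp
    fix \<epsilon> and x :: "real^'d" assume e: "0 < \<epsilon> \<and> \<epsilon> < min d 1" and x: "norm x \<le> R"
    have "norm (integral UNIV (\<lambda>z. mollifier \<phi> \<epsilon> z *\<^sub>R (b (x - z) - b x))) \<le> \<kappa>"
    proof (rule moll_bound[OF ok])
      show "0 < \<epsilon>" using e by simp
      show "continuous_on UNIV (\<lambda>z. b (x - z) - b x)"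
        by (intro continuous_intros continuous_on_compose2[OF b]) auto
      fix z :: "real^'d" assume z: "norm z \<le> \<epsilon>"
      have "x - z \<in> cball 0 (\<bar>R\<bar>+1)" "x \<in> cball 0 (\<bar>R\<bar>+1)" using z x e
        by (auto simp: dist_norm) (smt (verit) norm_triangle_ineq4)
      moreover have "dist (x - z) x < d" using z e by (simp add: dist_norm)
      ultimately have "dist (b (x - z)) (b x) < \<kappa>" using dd by blast
      thus "norm (b (x - z) - b x) \<le> \<kappa>" by (simp add: dist_norm)
    qed
    thus "norm (mollify b \<phi> \<epsilon> x - b x) \<le> \<kappa>"
      using mollify_minus_self[OF ok _ b, of \<epsilon> x] e by simp
  qed
qed

lemma mollify_Cb:
  fixes b :: "real^'d \<Rightarrow> real^'d"
  assumes ok: "moll_ok \<phi>" and e: "\<epsilon> > 0" and Cb: "cond_Cb \<rho> b"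
  shows "cond_Cb \<rho> (mollify b \<phi> \<epsilon>)"
proof -
  have b: "continuous_on UNIV b" using Cb by (simp add: cond_Cb_def)
  have bi: "\<And>x y j. (x $ j - y $ j) * (b x $ j - b y $ j) \<le> \<bar>x $ j - y $ j\<bar> * \<rho> (l1norm (x - y))"
    using Cb by (simp add: cond_Cb_def)
  have mi: "(mollifier \<phi> \<epsilon> has_integral 1) UNIV"
    using ok e mollifier_int[of \<epsilon> \<phi>] unfolding moll_ok_def by auto
  have nn: "mollifier \<phi> \<epsilon> z \<ge> 0" for z
    using ok e unfolding moll_ok_def mollifier_def by auto
  have "(x $ j - y $ j) * (mollify b \<phi> \<epsilon> x $ j - mollify b \<phi> \<epsilon> y $ j)
      \<le> \<bar>x $ j - y $ j\<bar> * \<rho> (l1norm (x - y))" for x y j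
  proof -
    define c where "c = x $ j - y $ j"
    define R where "R = \<bar>x $ j - y $ j\<bar> * \<rho> (l1norm (x - y))"
    have cx': "continuous_on UNIV (\<lambda>z. b (x - z))" "continuous_on UNIV (\<lambda>z. b (y - z))"
      by (intro continuous_on_compose2[OF b] continuous_intros; auto)+
    define I where "I = integral UNIV (\<lambda>z. mollifier \<phi> \<epsilon> z *\<^sub>R (b (x - z) - b (y - z)))"
    have eq: "mollify b \<phi> \<epsilon> x - mollify b \<phi> \<epsilon> y = I"
      unfolding mollify_def I_def by (rule mollify_diff[OF ok e cx'])
    have hI: "((\<lambda>z. mollifier \<phi> \<epsilon> z *\<^sub>R (b (x - z) - b (y - z))) has_integral I) UNIV"
      unfolding I_def by (intro integrable_integral moll_integrable[OF ok e] continuous_intros cx')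
    have bl: "bounded_linear (\<lambda>v::real^'d. c * v $ j)"
      by (rule bounded_linear_compose[OF bounded_linear_mult_right bounded_linear_vec_nth])
    have h1: "((\<lambda>z. c * (mollifier \<phi> \<epsilon> z *\<^sub>R (b (x - z) - b (y - z))) $ j) has_integral c * I $ j) UNIV"
      using has_integral_linear[OF hI bl] by (simp add: o_def)
    have h2: "((\<lambda>z. mollifier \<phi> \<epsilon> z * R) has_integral R) UNIV"
      using has_integral_mult_left[OF mi, of R] by simp
    have "c * I $ j \<le> R"
    proof (rule has_integral_le[OF h1 h2])
      fix z :: "real^'d"
      have "c * (b (x - z) $ j - b (y - z) $ j) \<le> R"
        using bi[where x="x - z" and y="y - z" and j=j] unfolding c_def R_def by simp
      hence "mollifier \<phi> \<epsilon> z * (c * (b (x - z) $ j - b (y - z) $ j)) \<le> mollifier \<phi> \<epsilon> z * R"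
        using nn[of z] by (simp add: mult_left_mono)
      thus "c * (mollifier \<phi> \<epsilon> z *\<^sub>R (b (x - z) - b (y - z))) $ j \<le> mollifier \<phi> \<epsilon> z * R"
        by (simp add: algebra_simps)
    qed
    thus ?thesis using eq[symmetric] unfolding c_def R_def by simp
  qed
  thus ?thesis unfolding cond_Cb_def using mollify_cont[OF ok e b] by blast
qed

lemma right_deriv_le_aux:
  fixes h :: "real \<Rightarrow> real"
  assumes ab: "a \<le> b" and hc: "continuous_on {a..b} h"
    and hd: "\<And>s. a \<le> s \<Longrightarrow> s < b \<Longrightarrow> \<exists>D. (h has_real_derivative D) (at s within {s..b}) \<and> D \<le> K"
    and k: "\<kappa> > 0"
  shows "h b - h a \<le> (K + \<kappa>) * (b - a)"
proof -
  define S where "S = {s \<in> {a..b}. h s - h a \<le> (K + \<kappa>) * (s - a)}"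
  have cS: "closed S" unfolding S_def
    by (rule continuous_on_closed_Collect_le) (auto intro!: continuous_intros hc)
  have aS: "a \<in> S" using ab by (simp add: S_def)
  have bS: "bdd_above S" unfolding S_def by (auto intro: bdd_aboveI[of _ b])
  define \<sigma> where "\<sigma> = Sup S"
  have sS: "\<sigma> \<in> S" unfolding \<sigma>_def using closed_contains_Sup[OF _ bS cS] aS by blast
  have sle: "\<And>s. s \<in> S \<Longrightarrow> s \<le> \<sigma>" unfolding \<sigma>_def by (rule cSup_upper[OF _ bS])
  have "\<sigma> = b"
  proof (rule ccontr)
    assume "\<sigma> \<noteq> b"
    hence sb: "\<sigma> < b" "a \<le> \<sigma>" using sS by (auto simp: S_def)
    obtain D where D: "(h has_real_derivative D) (at \<sigma> within {\<sigma>..b})" "D \<le> K"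
      using hd[OF sb(2) sb(1)] by blast
    have "((\<lambda>y. (h y - h \<sigma>) / (y - \<sigma>)) \<longlongrightarrow> D) (at \<sigma> within {\<sigma>..b})"
      using D(1) by (simp add: has_field_derivative_iff)
    hence "\<forall>\<^sub>F y in at \<sigma> within {\<sigma>..b}. dist ((h y - h \<sigma>) / (y - \<sigma>)) D < \<kappa>"
      using k by (rule tendstoD)
    then obtain d where d: "d > 0" and
      dd0: "\<forall>y\<in>{\<sigma>..b}. y \<noteq> \<sigma> \<and> dist y \<sigma> < d \<longrightarrow> dist ((h y - h \<sigma>) / (y - \<sigma>)) D < \<kappa>"
      unfolding eventually_at by metis
    have dd: "\<And>y. y \<in> {\<sigma>..b} \<Longrightarrow> 0 < dist y \<sigma> \<Longrightarrow> dist y \<sigma> < d \<Longrightarrow> dist ((h y - h \<sigma>) / (y - \<sigma>)) D < \<kappa>"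
      using dd0 by auto
    define y where "y = min (\<sigma> + d/2) b"
    have y: "y \<in> {\<sigma>..b}" "0 < dist y \<sigma>" "dist y \<sigma> < d" "\<sigma> < y"
      using d sb by (auto simp: y_def dist_real_def)
    have q: "(h y - h \<sigma>) / (y - \<sigma>) < D + \<kappa>" using dd[OF y(1-3)] by (simp add: dist_real_def)
    have "h y - h \<sigma> < (D + \<kappa>) * (y - \<sigma>)" using q y(4) by (simp add: field_simps)
    also have "\<dots> \<le> (K + \<kappa>) * (y - \<sigma>)" using D(2) y(4) by (intro mult_right_mono) auto
    finally have "h y - h a \<le> (K + \<kappa>) * (y - a)"
      using sS by (simp add: S_def algebra_simps)
    hence "y \<in> S" using y sb by (simp add: S_def)
    thus False using sle y(4) by fastforce
  qed
  thus ?thesis using sS by (simp add: S_def)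
qed

lemma right_deriv_le:
  fixes h :: "real \<Rightarrow> real"
  assumes ab: "a \<le> b" and hc: "continuous_on {a..b} h"
    and hd: "\<And>s. a \<le> s \<Longrightarrow> s < b \<Longrightarrow> \<exists>D. (h has_real_derivative D) (at s within {s..b}) \<and> D \<le> K"
  shows "h b - h a \<le> K * (b - a)"
proof (cases "a = b")
  case True thus ?thesis by simp
next
  case False
  hence ba: "b - a > 0" using ab by simp
  show ?thesis
  proof (rule field_le_epsilon)
    fix e :: real assume e: "e > 0"
    have "h b - h a \<le> (K + e / (b - a)) * (b - a)"
      by (rule right_deriv_le_aux[OF ab hc hd]) (use e ba in auto)
    also have "(K + e / (b - a)) * (b - a) = K * (b - a) + e" using ba by (simp add: field_simps)
    finally show "h b - h a \<le> K * (b - a) + e" .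
  qed
qed

lemma vec_nth_vderiv:
  fixes f :: "real \<Rightarrow> real^'d"
  assumes "(f has_vector_derivative f') F"
  shows "((\<lambda>x. f x $ j) has_real_derivative f' $ j) F"
proof -
  have "((\<lambda>x. f x $ j) has_derivative (\<lambda>x. (x *\<^sub>R f') $ j)) F"
    using bounded_linear.has_derivative[OF bounded_linear_vec_nth assms[unfolded has_vector_derivative_def]] .
  moreover have "(\<lambda>x. (x *\<^sub>R f') $ j) = (*) (f' $ j)" by (auto simp: mult.commute)
  ultimately show ?thesis by (simp add: has_field_derivative_def)
qed

lemma l1norm_cont: "continuous_on UNIV (l1norm :: real^'d \<Rightarrow> real)"
  unfolding l1norm_def[abs_def] by (intro continuous_intros)

lemma l1norm_ge: "\<bar>x $ j\<bar> \<le> l1norm x"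
  unfolding l1norm_def by (rule member_le_sum) auto

lemma norm_le_l1norm: "norm x \<le> l1norm x"
  unfolding l1norm_def by (rule norm_le_l1_cart)

lemma core:
  fixes \<rho> :: "real \<Rightarrow> real" and b B :: "real^'d \<Rightarrow> real^'d" and Xf Yf :: "real \<Rightarrow> real^'d"
  assumes rho: "osgood_class \<rho>"
    and Cb: "cond_Cb \<rho> b"
    and t: "t \<ge> 0"
    and Zc: "continuous_on {0..t} (\<lambda>s. Xf s - Yf s)"
    and Z0: "Xf 0 = Yf 0"
    and Zd: "\<And>s. 0 \<le> s \<Longrightarrow> s < t \<Longrightarrow>
       ((\<lambda>s. Xf s - Yf s) has_vector_derivative (B (Xf s) - b (Yf s))) (at s within {s..t})"
    and a: "0 < a" "a < \<eta>"
    and c1: "0 \<le> c1" "c1 \<le> \<rho> a"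
    and Bb: "\<And>s. s \<in> {0..t} \<Longrightarrow> l1norm (Xf s - Yf s) < \<eta> \<Longrightarrow> norm (B (Xf s) - b (Xf s)) \<le> c1"
    and big: "integral {a..\<eta>} (\<lambda>r. 1 / \<rho> r) > 2 * real CARD('d) * t"
  shows "l1norm (Xf t - Yf t) < \<eta>"
proof (rule ccontr)
  assume "\<not> l1norm (Xf t - Yf t) < \<eta>"
  hence Zt: "\<eta> \<le> l1norm (Xf t - Yf t)" by simp
  define D where "D = real CARD('d)"
  have D: "D > 0" by (simp add: D_def)
  have rc: "continuous_on {0<..} \<rho>" and rm: "mono_on {0<..} \<rho>" and rp: "\<And>s. s > 0 \<Longrightarrow> \<rho> s > 0"
    using rho unfolding osgood_class_def by blast+
  have bi: "\<And>x y j. (x $ j - y $ j) * (b x $ j - b y $ j) \<le> \<bar>x $ j - y $ j\<bar> * \<rho> (l1norm (x - y))"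
    using Cb by (simp add: cond_Cb_def)
  define Z where "Z = (\<lambda>s. Xf s - Yf s)"
  define g where "g = (\<lambda>s. B (Xf s) - b (Yf s))"
  define \<gamma> where "\<gamma> = a / D"
  have \<gamma>: "\<gamma> > 0" using a D by (simp add: \<gamma>_def)
  define v where "v = (\<lambda>s. \<Sum>j\<in>UNIV. sqrt ((Z s $ j)\<^sup>2 + \<gamma>\<^sup>2))"
  define f where "f = (\<lambda>r. 1 / (D * \<rho> r + D * c1))"
  define a' where "a' = a / 2"
  have a': "0 < a'" "a' < a" using a by (auto simp: a'_def)
  define F where "F = (\<lambda>x. integral {a'..x} f)"
  have dpos: "\<And>r. r > 0 \<Longrightarrow> D * \<rho> r + D * c1 > 0"
  proof -
    fix r :: real assume "r > 0"
    hence "D * \<rho> r > 0" using rp D by simp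
    moreover have "D * c1 \<ge> 0" using D c1 by simp
    ultimately show "D * \<rho> r + D * c1 > 0" by linarith
  qed
  have fpos: "\<And>r. r > 0 \<Longrightarrow> f r > 0" using dpos by (simp add: f_def)
  have fc: "continuous_on {0<..} f"
    unfolding f_def using dpos
    by (intro continuous_intros rc) force+
  have fci: "\<And>u w. 0 < u \<Longrightarrow> continuous_on {u..w} f"
    by (rule continuous_on_subset[OF fc]) auto
  have Fd: "\<And>x. x > a' \<Longrightarrow> (F has_real_derivative f x) (at x)"
  proof -
    fix x assume x: "x > a'"
    have "(F has_real_derivative f x) (at x within {a'..x+1})"
      unfolding F_def by (rule integral_has_real_derivative) (use fci a' x in auto)
    moreover have "at x within {a'..x+1} = at x" using x by (intro at_within_Icc_at) auto
    ultimately show "(F has_real_derivative f x) (at x)" by simp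
  qed
  have Fc: "continuous_on {a'<..} F"
    by (rule continuous_at_imp_continuous_on) (use Fd DERIV_isCont in auto)
  have sq1: "\<And>z. \<bar>z\<bar> \<le> sqrt (z\<^sup>2 + \<gamma>\<^sup>2)" by (simp add: real_le_rsqrt)
  have sq2: "\<And>z. \<gamma> \<le> sqrt (z\<^sup>2 + \<gamma>\<^sup>2)" using \<gamma> by (simp add: real_le_rsqrt)
  have vge: "l1norm (Z s) \<le> v s" for s
    unfolding v_def l1norm_def by (rule sum_mono) (rule sq1)
  have vge2: "a \<le> v s" for s
  proof -
    have "(\<Sum>j\<in>(UNIV::'d set). \<gamma>) \<le> v s" unfolding v_def by (rule sum_mono) (rule sq2)
    thus ?thesis using D by (simp add: \<gamma>_def D_def)
  qed
  have v0: "v 0 = a"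
    using D a by (simp add: v_def Z_def Z0 \<gamma>_def D_def)
  have Zcj: "continuous_on {0..t} (\<lambda>s. Z s $ j)" for j
    unfolding Z_def by (intro continuous_intros Zc)
  have vc: "continuous_on {0..t} v"
    unfolding v_def by (intro continuous_intros Zcj)
  define v' where "v' = (\<lambda>s. \<Sum>j\<in>UNIV. Z s $ j * g s $ j / sqrt ((Z s $ j)\<^sup>2 + \<gamma>\<^sup>2))"
  have vd: "(v has_real_derivative v' s) (at s within {s..t})" if s: "0 \<le> s" "s < t" for s
  proof -
    have "((\<lambda>s. sqrt ((Z s $ j)\<^sup>2 + \<gamma>\<^sup>2)) has_real_derivative
            Z s $ j * g s $ j / sqrt ((Z s $ j)\<^sup>2 + \<gamma>\<^sup>2)) (at s within {s..t})" for j
    proof -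
      have zd: "((\<lambda>s. Z s $ j) has_real_derivative g s $ j) (at s within {s..t})"
        unfolding Z_def g_def by (rule vec_nth_vderiv[OF Zd[OF s]])
      have qd: "((\<lambda>s. (Z s $ j)\<^sup>2 + \<gamma>\<^sup>2) has_real_derivative 2 * Z s $ j * g s $ j) (at s within {s..t})"
        by (auto intro!: derivative_eq_intros zd)
      have pos: "0 < (Z s $ j)\<^sup>2 + \<gamma>\<^sup>2" using \<gamma> by (simp add: add_nonneg_pos)
      from DERIV_chain2[OF DERIV_real_sqrt[OF pos] qd]
      show ?thesis by (simp add: field_simps)
    qed
    thus ?thesis unfolding v_def v'_def by (intro DERIV_sum) auto
  qed
  define S where "S = {s \<in> {0..t}. \<eta> \<le> l1norm (Z s)}"
  have cS: "closed S" unfolding S_def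
    by (rule continuous_on_closed_Collect_le)
       (auto intro!: continuous_on_compose2[OF l1norm_cont] simp: Z_def Zc)
  have tS: "t \<in> S" using t Zt by (simp add: S_def Z_def)
  have bS: "bdd_below S" unfolding S_def by (auto intro: bdd_belowI[of _ 0])
  define \<tau> where "\<tau> = Inf S"
  have \<tau>S: "\<tau> \<in> S" unfolding \<tau>_def using closed_contains_Inf[OF _ bS cS] tS by blast
  have \<tau>t: "0 \<le> \<tau>" "\<tau> \<le> t" using \<tau>S by (auto simp: S_def)
  have before: "l1norm (Z s) < \<eta>" if "0 \<le> s" "s < \<tau>" for s
  proof (rule ccontr)
    assume "\<not> l1norm (Z s) < \<eta>"
    hence "s \<in> S" using that \<tau>t by (simp add: S_def)
    hence "\<tau> \<le> s" unfolding \<tau>_def by (rule cInf_lower[OF _ bS])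
    thus False using that by simp
  qed
  have dbound: "f (v s) * v' s \<le> 1" if s: "0 \<le> s" "s < \<tau>" for s
  proof -
    have sb: "s \<in> {0..t}" using s \<tau>t by simp
    have lt: "l1norm (Z s) < \<eta>" by (rule before[OF s])
    have vpos: "v s > 0" using vge2[of s] a by simp
    have rv: "\<rho> (v s) > 0" by (rule rp[OF vpos])
    have trm: "Z s $ j * g s $ j / sqrt ((Z s $ j)\<^sup>2 + \<gamma>\<^sup>2) \<le> c1 + \<rho> (v s)" for j
    proof -
      define z where "z = Z s $ j"
      define q where "q = sqrt (z\<^sup>2 + \<gamma>\<^sup>2)"
      have q: "q > 0" "\<bar>z\<bar> \<le> q" using \<gamma> sq1[of z] by (auto simp: q_def add_nonneg_pos)
      have e1: "z * (B (Xf s) - b (Xf s)) $ j \<le> \<bar>z\<bar> * c1"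
      proof -
        have "\<bar>(B (Xf s) - b (Xf s)) $ j\<bar> \<le> c1"
          using component_le_norm_cart[of "B (Xf s) - b (Xf s)" j] Bb[OF sb] lt by (simp add: Z_def)
        hence "\<bar>z\<bar> * \<bar>(B (Xf s) - b (Xf s)) $ j\<bar> \<le> \<bar>z\<bar> * c1"
          by (intro mult_left_mono) auto
        moreover have "z * (B (Xf s) - b (Xf s)) $ j \<le> \<bar>z\<bar> * \<bar>(B (Xf s) - b (Xf s)) $ j\<bar>"
          by (metis abs_ge_self abs_mult)
        ultimately show ?thesis by linarith
      qed
      have e2: "z * (b (Xf s) - b (Yf s)) $ j \<le> \<bar>z\<bar> * \<rho> (v s)"
      proof (cases "z = 0")
        case True thus ?thesis by simp
      next
        case False
        have "0 < \<bar>z\<bar>" using False by simp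
        also have "\<bar>z\<bar> \<le> l1norm (Z s)" unfolding z_def by (rule l1norm_ge)
        finally have lp: "0 < l1norm (Z s)" .
        have "\<rho> (l1norm (Z s)) \<le> \<rho> (v s)"
          using rm lp vge[of s] by (auto simp: mono_on_def)
        moreover have "z * (b (Xf s) - b (Yf s)) $ j \<le> \<bar>z\<bar> * \<rho> (l1norm (Z s))"
          using bi[where x="Xf s" and y="Yf s" and j=j] by (simp add: z_def Z_def)
        ultimately show ?thesis by (smt (verit) abs_ge_zero mult_left_mono)
      qed
      have gs: "g s $ j = (B (Xf s) - b (Xf s)) $ j + (b (Xf s) - b (Yf s)) $ j"
        by (simp add: g_def)
      have "z * g s $ j \<le> \<bar>z\<bar> * (c1 + \<rho> (v s))"
        using e1 e2 unfolding gs by (simp add: algebra_simps)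
      also have "\<dots> \<le> q * (c1 + \<rho> (v s))"
        using q c1 rv by (intro mult_right_mono) auto
      finally have "z * g s $ j \<le> q * (c1 + \<rho> (v s))" .
      thus ?thesis using q unfolding z_def[symmetric] q_def[symmetric] by (simp add: divide_le_eq mult.commute)
    qed
    have "v' s \<le> (\<Sum>j\<in>(UNIV::'d set). c1 + \<rho> (v s))"
      unfolding v'_def by (rule sum_mono) (rule trm)
    also have "\<dots> = D * \<rho> (v s) + D * c1" by (simp add: D_def algebra_simps)
    finally have "v' s \<le> D * \<rho> (v s) + D * c1" .
    moreover have "D * \<rho> (v s) + D * c1 > 0" using D rv c1 by (simp add: add_pos_nonneg)
    ultimately show ?thesis by (simp add: f_def divide_le_eq)
  qed
  define h where "h = (\<lambda>s. F (v s))"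
  have "h \<tau> - h 0 \<le> 1 * (\<tau> - 0)"
  proof (rule right_deriv_le)
    show "0 \<le> \<tau>" by (rule \<tau>t)
    show "continuous_on {0..\<tau>} h" unfolding h_def
      by (rule continuous_on_compose2[OF Fc continuous_on_subset[OF vc]])
         (use \<tau>t vge2 a' in \<open>auto simp: less_le_trans\<close>)
    fix s assume s: "0 \<le> s" "s < \<tau>"
    have "(v has_real_derivative v' s) (at s within {s..\<tau>})"
      by (rule has_field_derivative_subset[OF vd]) (use s \<tau>t in auto)
    have "(h has_real_derivative f (v s) * v' s) (at s within {s..\<tau>})"
    proof -
      have "a' < v s" using vge2[of s] a' by simp
      from DERIV_chain2[where g=v and f=F, OF Fd[OF this] \<open>(v has_real_derivative v' s) (at s within {s..\<tau>})\<close>]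
      show ?thesis unfolding h_def .
    qed
    thus "\<exists>D. (h has_real_derivative D) (at s within {s..\<tau>}) \<and> D \<le> 1"
      using dbound[OF s] by blast
  qed
  hence hle: "F (v \<tau>) - F a \<le> t" using \<tau>t v0 by (simp add: h_def)
  have vt: "\<eta> \<le> v \<tau>" using \<tau>S vge[of \<tau>] by (simp add: S_def)
  have "F (v \<tau>) - F a = integral {a..v \<tau>} f"
    unfolding F_def
    using Henstock_Kurzweil_Integration.integral_combine[of a' a "v \<tau>" f] a' vge2[of \<tau>]
      integrable_continuous_real[OF fci[OF a'(1)], of "v \<tau>"]
    by simp
  also have "integral {a..v \<tau>} f = integral {a..\<eta>} f + integral {\<eta>..v \<tau>} f"
    using Henstock_Kurzweil_Integration.integral_combine[of a \<eta> "v \<tau>" f] a vt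
      integrable_continuous_real[OF fci[OF a(1)], of "v \<tau>"]
    by simp
  also have "integral {\<eta>..v \<tau>} f \<ge> 0"
    by (rule Henstock_Kurzweil_Integration.integral_nonneg)
       (use integrable_continuous_real[OF fci, of \<eta> "v \<tau>"] a fpos in \<open>auto\<close>,
        metis a(1) a(2) fpos less_eq_real_def less_le_trans)
  hence "integral {a..\<eta>} f + integral {\<eta>..v \<tau>} f \<ge> integral {a..\<eta>} f" by simp
  moreover have "integral {a..\<eta>} f \<ge> integral {a..\<eta>} (\<lambda>r. (1 / (2 * D)) * (1 / \<rho> r))"
  proof (rule integral_le)
    have rci: "continuous_on {a..\<eta>} \<rho>" by (rule continuous_on_subset[OF rc]) (use a in auto)
    show "(\<lambda>r. (1 / (2 * D)) * (1 / \<rho> r)) integrable_on {a..\<eta>}"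
      by (rule integrable_continuous_real)
         (use rci rp a D in \<open>auto intro!: continuous_intros\<close>, metis less_le_trans less_irrefl)
    show "f integrable_on {a..\<eta>}" by (rule integrable_continuous_real[OF fci[OF a(1)]])
    fix r assume r: "r \<in> {a..\<eta>}"
    have rpos: "\<rho> r > 0" using r a rp by auto
    have "\<rho> a \<le> \<rho> r" using rm r a by (auto simp: mono_on_def)
    hence "c1 \<le> \<rho> r" using c1 by linarith
    hence "D * \<rho> r + D * c1 \<le> 2 * D * \<rho> r" using D by (simp add: algebra_simps)
    moreover have "D * \<rho> r + D * c1 > 0" using D rpos c1 by (simp add: add_pos_nonneg)
    ultimately show "(1 / (2 * D)) * (1 / \<rho> r) \<le> f r"
      using rpos D by (simp add: f_def field_simps)
  qed
  moreover have "integral {a..\<eta>} (\<lambda>r. (1 / (2 * D)) * (1 / \<rho> r)) = (1 / (2 * D)) * integral {a..\<eta>} (\<lambda>r. 1 / \<rho> r)"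
    by (rule Henstock_Kurzweil_Integration.integral_mult_right)
  moreover have "(1 / (2 * D)) * integral {a..\<eta>} (\<lambda>r. 1 / \<rho> r) > t"
    using big D by (simp add: D_def field_simps)
  ultimately have "F (v \<tau>) - F a > t" by linarith
  thus False using hle by simp
qed

lemma V_rcont:
  fixes l :: "real \<Rightarrow> real^'d" and W :: "'w \<Rightarrow> real \<Rightarrow> real^'d"
  assumes ell: "l \<in> subord_paths" and Wc: "continuous_on {0..} (W \<omega>)" and s: "s \<ge> 0"
  shows "continuous (at_right s) (time_changed W l \<omega>)"
proof -
  have lnn: "\<And>u j. u \<ge> 0 \<Longrightarrow> l u $ j \<ge> 0" and lrc: "continuous (at_right s) l"
    using ell s unfolding subord_paths_def by blast+
  have cj: "continuous (at_right s) (\<lambda>u. W \<omega> (l u $ j) $ j)" for j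
  proof -
    have c1: "continuous (at_right s) (\<lambda>u. l u $ j)" using lrc by (rule continuous_component)
    have "continuous (at (l s $ j) within {0..}) (W \<omega>)"
      using Wc lnn[OF s, of j] continuous_on_eq_continuous_within by auto
    hence "continuous (at (l s $ j) within (\<lambda>u. l u $ j) ` {s<..}) (W \<omega>)"
      by (rule continuous_within_subset) (use lnn s in auto)
    from continuous_within_compose2[OF c1 this]
    have "continuous (at_right s) (\<lambda>u. W \<omega> (l u $ j))" .
    thus ?thesis by (rule continuous_component)
  qed
  show ?thesis unfolding time_changed_def continuous_def
    by (rule tendsto_vec_lambda) (use cj in \<open>simp add: continuous_def\<close>)
qed

lemma V_bound:
  fixes l :: "real \<Rightarrow> real^'d" and W :: "'w \<Rightarrow> real \<Rightarrow> real^'d"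
  assumes ell: "l \<in> subord_paths" and Wc: "continuous_on {0..} (W \<omega>)" and t: "t \<ge> 0"
  shows "\<exists>R. \<forall>s\<in>{0..t}. norm (time_changed W l \<omega> s) \<le> R"
proof -
  have lnn: "\<And>u j. u \<ge> 0 \<Longrightarrow> l u $ j \<ge> 0" and lm: "\<And>j. mono_on {0..} (\<lambda>u. l u $ j)"
    using ell unfolding subord_paths_def by blast+
  have "\<forall>j. \<exists>B. \<forall>x\<in>{0..l t $ j}. norm (W \<omega> x) \<le> B"
  proof
    fix j
    have "compact (W \<omega> ` {0..l t $ j})"
      by (rule compact_continuous_image) (rule continuous_on_subset[OF Wc], auto)
    hence "bounded (W \<omega> ` {0..l t $ j})" by (rule compact_imp_bounded)
    thus "\<exists>B. \<forall>x\<in>{0..l t $ j}. norm (W \<omega> x) \<le> B" unfolding bounded_iff by auto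
  qed
  then obtain Bf where Bf: "\<And>j x. x \<in> {0..l t $ j} \<Longrightarrow> norm (W \<omega> x) \<le> Bf j" by metis
  show ?thesis
  proof (intro exI[of _ "\<Sum>j\<in>UNIV. Bf j"] ballI)
    fix s assume s: "s \<in> {0..t}"
    have "norm (time_changed W l \<omega> s) \<le> (\<Sum>j\<in>UNIV. \<bar>time_changed W l \<omega> s $ j\<bar>)"
      by (rule norm_le_l1_cart)
    also have "\<dots> \<le> (\<Sum>j\<in>UNIV. Bf j)"
    proof (rule sum_mono)
      fix j
      have "l s $ j \<in> {0..l t $ j}"
        using lnn[of s j] lm[of j] s by (auto simp: mono_on_def)
      hence "norm (W \<omega> (l s $ j)) \<le> Bf j" by (rule Bf)
      thus "\<bar>time_changed W l \<omega> s $ j\<bar> \<le> Bf j"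
        using component_le_norm_cart[of "W \<omega> (l s $ j)" j] by (simp add: time_changed_def)
    qed
    finally show "norm (time_changed W l \<omega> s) \<le> (\<Sum>j\<in>UNIV. Bf j)" .
  qed
qed

lemma sol_facts:
  fixes G :: "real^'d \<Rightarrow> real^'d" and Xs V :: "real \<Rightarrow> real^'d"
  assumes Gc: "continuous_on UNIV G" and t: "t \<ge> 0"
    and Vrc: "\<forall>s\<ge>0. continuous (at_right s) V"
    and eq: "\<forall>u\<ge>0. ((\<lambda>r. G (Xs r)) has_integral (Xs u - x0 - V u)) {0..u}"
  shows "(\<lambda>r. G (Xs r)) integrable_on {0..t}"
    and "\<And>u. u \<in> {0..t} \<Longrightarrow> Xs u = x0 + V u + integral {0..u} (\<lambda>r. G (Xs r))"
    and "continuous_on {0..t} (\<lambda>u. integral {0..u} (\<lambda>r. G (Xs r)))"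
    and "Xs 0 = x0 + V 0"
    and "\<And>s. 0 \<le> s \<Longrightarrow> s < t \<Longrightarrow>
          ((\<lambda>u. integral {0..u} (\<lambda>r. G (Xs r))) has_vector_derivative G (Xs s)) (at s within {s..t})"
proof -
  define f where "f = (\<lambda>r. G (Xs r))"
  show fi: "(\<lambda>r. G (Xs r)) integrable_on {0..t}" using eq[rule_format, OF t] by blast
  show xe: "\<And>u. u \<in> {0..t} \<Longrightarrow> Xs u = x0 + V u + integral {0..u} (\<lambda>r. G (Xs r))"
  proof -
    fix u assume "u \<in> {0..t}"
    hence "integral {0..u} (\<lambda>r. G (Xs r)) = Xs u - x0 - V u" using eq by (simp add: integral_unique)
    thus "Xs u = x0 + V u + integral {0..u} (\<lambda>r. G (Xs r))" by (simp add: algebra_simps)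
  qed
  show ic: "continuous_on {0..t} (\<lambda>u. integral {0..u} (\<lambda>r. G (Xs r)))"
    by (rule indefinite_integral_continuous_1[OF fi])
  show "Xs 0 = x0 + V 0" using xe[of 0] t by simp
  fix s assume s: "0 \<le> s" "s < t"
  have c1: "continuous (at s within {s..t}) (\<lambda>u. x0 + V u + integral {0..u} f)"
  proof (intro continuous_intros)
    show "continuous (at s within {s..t}) V"
      by (rule continuous_within_subset[of _ "{s..}"]) (use Vrc[rule_format, OF s(1)] in \<open>auto simp: at_within_Ici_at_right\<close>)
    have "continuous (at s within {0..t}) (\<lambda>u. integral {0..u} f)"
      using ic s unfolding f_def by (simp add: continuous_on_eq_continuous_within)
    thus "continuous (at s within {s..t}) (\<lambda>u. integral {0..u} f)"
      by (rule continuous_within_subset) (use s in auto)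
  qed
  have c2: "continuous (at s within {s..t}) Xs"
    by (rule continuous_transform_within[OF c1, of 1]) (use xe s in \<open>auto simp: f_def\<close>)
  have c3: "continuous (at s within {s..t}) f"
    unfolding f_def by (rule continuous_within_compose3[OF _ c2]) (use Gc in \<open>simp add: continuous_on_eq_continuous_at\<close>)
  have fi2: "f integrable_on {s..t}"
    by (rule integrable_on_subinterval[OF fi[folded f_def]]) (use s in auto)
  have d1: "((\<lambda>u. integral {s..u} f) has_vector_derivative f s) (at s within {s..t})"
    using integral_has_vector_derivative_continuous_at[OF fi2, of s "{}"] c3 s by simp
  have d2: "((\<lambda>u. integral {0..s} f + integral {s..u} f) has_vector_derivative f s) (at s within {s..t})"
    using has_vector_derivative_add[OF has_vector_derivative_const d1] by simp
  show "((\<lambda>u. integral {0..u} (\<lambda>r. G (Xs r))) has_vector_derivative G (Xs s)) (at s within {s..t})"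
  proof (rule has_vector_derivative_transform[OF _ _ d2[unfolded f_def]])
    show "s \<in> {s..t}" using s by simp
    fix u assume u: "u \<in> {s..t}"
    show "integral {0..u} (\<lambda>r. G (Xs r)) = integral {0..s} (\<lambda>r. G (Xs r)) + integral {s..u} (\<lambda>r. G (Xs r))"
      using Henstock_Kurzweil_Integration.integral_combine[of 0 s u "\<lambda>r. G (Xs r)"] s u
        integrable_on_subinterval[OF fi, of 0 u]
      by auto
  qed
qed

theorem lemma2p5:
  fixes \<rho> :: "real \<Rightarrow> real" and b :: "real^'d \<Rightarrow> real^'d" and l :: "real \<Rightarrow> real^'d"
    and \<phi> :: "real^'d \<Rightarrow> real" and M :: "'w measure" and W :: "'w \<Rightarrow> real \<Rightarrow> real^'d"
    and x0 :: "real^'d"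
    and X :: "real \<Rightarrow> 'w \<Rightarrow> real \<Rightarrow> real^'d" and Y :: "'w \<Rightarrow> real \<Rightarrow> real^'d"
  assumes rho: "osgood_class \<rho>"
    and Cb: "cond_Cb \<rho> b"
    and ell: "l \<in> subord_paths"
    and phi_nonneg: "\<forall>x. \<phi> x \<ge> 0"
    and phi_smooth: "smooth_fun \<phi>"
    and phi_supp: "\<forall>x. norm x > 1 \<longrightarrow> \<phi> x = 0"
    and phi_int: "(\<phi> has_integral 1) UNIV"
    and BM: "std_brownian_motion M W"
    and Xeps: "\<forall>\<epsilon>\<in>{0<..<1}. \<forall>\<omega>\<in>space M. \<forall>t\<ge>0.
       ((\<lambda>s. mollify b \<phi> \<epsilon> (X \<epsilon> \<omega> s)) has_integral
          (X \<epsilon> \<omega> t - x0 - time_changed W l \<omega> t)) {0..t}"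
    and Xell: "\<forall>\<omega>\<in>space M. \<forall>t\<ge>0.
       ((\<lambda>s. b (Y \<omega> s)) has_integral (Y \<omega> t - x0 - time_changed W l \<omega> t)) {0..t}"
  shows "(\<forall>\<epsilon>\<in>{0<..<1}. cond_Cb \<rho> (mollify b \<phi> \<epsilon>)) \<and>
         (\<forall>\<omega>\<in>space M. \<forall>t\<ge>0. ((\<lambda>\<epsilon>. norm (X \<epsilon> \<omega> t - Y \<omega> t)) \<longlongrightarrow> 0) (at_right 0))"
proof -
  obtain DD :: "'d list \<Rightarrow> real^'d \<Rightarrow> real" where "DD [] = \<phi>" "\<And>js. continuous_on UNIV (DD js)"
    using phi_smooth unfolding smooth_fun_def by blast
  hence phic: "continuous_on UNIV \<phi>" by metis
  have ok: "moll_ok \<phi>" unfolding moll_ok_def using phic phi_nonneg phi_supp phi_int by blast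
  have bc: "continuous_on UNIV b" using Cb by (simp add: cond_Cb_def)
  have rc: "continuous_on {0<..} \<rho>" and rp: "\<And>s. s > 0 \<Longrightarrow> \<rho> s > 0"
    and osg: "filterlim (\<lambda>e. integral {e..1} (\<lambda>s. 1 / \<rho> s)) at_top (at_right 0)"
    using rho unfolding osgood_class_def by blast+
  have part1: "\<forall>\<epsilon>\<in>{0<..<1}. cond_Cb \<rho> (mollify b \<phi> \<epsilon>)"
    using mollify_Cb[OF ok _ Cb] by auto
  have part2: "((\<lambda>\<epsilon>. norm (X \<epsilon> \<omega> t - Y \<omega> t)) \<longlongrightarrow> 0) (at_right 0)"
    if \<omega>: "\<omega> \<in> space M" and t: "t \<ge> 0" for \<omega> t
  proof -
    have Wc: "continuous_on {0..} (W \<omega>)"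
      using BM \<omega> unfolding std_brownian_motion_def by blast
    define V where "V = time_changed W l \<omega>"
    have Vrc: "\<forall>s\<ge>0. continuous (at_right s) V"
      unfolding V_def using V_rcont[where W=W and \<omega>=\<omega>, OF ell Wc] by blast
    have Yeq: "\<forall>u\<ge>0. ((\<lambda>r. b (Y \<omega> r)) has_integral (Y \<omega> u - x0 - V u)) {0..u}"
      using Xell \<omega> by (simp add: V_def)
    note YF = sol_facts[OF bc t Vrc Yeq]
    have XF: "(\<lambda>r. mollify b \<phi> \<epsilon> (X \<epsilon> \<omega> r)) integrable_on {0..t}
       \<and> (\<forall>u\<in>{0..t}. X \<epsilon> \<omega> u = x0 + V u + integral {0..u} (\<lambda>r. mollify b \<phi> \<epsilon> (X \<epsilon> \<omega> r)))
       \<and> continuous_on {0..t} (\<lambda>u. integral {0..u} (\<lambda>r. mollify b \<phi> \<epsilon> (X \<epsilon> \<omega> r)))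
       \<and> X \<epsilon> \<omega> 0 = x0 + V 0
       \<and> (\<forall>s. 0 \<le> s \<longrightarrow> s < t \<longrightarrow>
          ((\<lambda>u. integral {0..u} (\<lambda>r. mollify b \<phi> \<epsilon> (X \<epsilon> \<omega> r))) has_vector_derivative
             mollify b \<phi> \<epsilon> (X \<epsilon> \<omega> s)) (at s within {s..t}))"
      if e: "\<epsilon> \<in> {0<..<1}" for \<epsilon>
    proof -
      have Gc: "continuous_on UNIV (mollify b \<phi> \<epsilon>)" using mollify_cont[OF ok _ bc] e by simp
      have Xeq: "\<forall>u\<ge>0. ((\<lambda>r. mollify b \<phi> \<epsilon> (X \<epsilon> \<omega> r)) has_integral (X \<epsilon> \<omega> u - x0 - V u)) {0..u}"
        using Xeps \<omega> e by (simp add: V_def)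
      note XF0 = sol_facts[OF Gc t Vrc Xeq]
      show ?thesis using XF0 by blast
    qed
    obtain RV where RV: "\<And>s. s \<in> {0..t} \<Longrightarrow> norm (V s) \<le> RV"
      using V_bound[where W=W and \<omega>=\<omega>, OF ell Wc t] unfolding V_def by blast
    have "bounded ((\<lambda>u. integral {0..u} (\<lambda>r. b (Y \<omega> r))) ` {0..t})"
      by (rule compact_imp_bounded, rule compact_continuous_image[OF YF(3)]) auto
    then obtain RJ where RJ: "\<And>s. s \<in> {0..t} \<Longrightarrow> norm (integral {0..s} (\<lambda>r. b (Y \<omega> r))) \<le> RJ"
      unfolding bounded_iff by blast
    define R where "R = norm x0 + RV + RJ"
    have YR: "norm (Y \<omega> s) \<le> R" if s: "s \<in> {0..t}" for s
    proof -
      have "norm (x0 + V s + integral {0..s} (\<lambda>r. b (Y \<omega> r))) \<le> norm (x0 + V s) + norm (integral {0..s} (\<lambda>r. b (Y \<omega> r)))"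
        by (rule norm_triangle_ineq)
      moreover have "norm (x0 + V s) \<le> norm x0 + norm (V s)" by (rule norm_triangle_ineq)
      ultimately have "norm (Y \<omega> s) \<le> norm x0 + norm (V s) + norm (integral {0..s} (\<lambda>r. b (Y \<omega> r)))"
        using arg_cong[OF YF(2)[OF s], of norm] by linarith
      thus ?thesis using RV[OF s] RJ[OF s] by (simp add: R_def)
    qed
    show ?thesis unfolding tendsto_iff
    proof (intro allI impI)
      fix e0 :: real assume e0: "e0 > 0"
      define \<eta> where "\<eta> = min e0 1"
      have \<eta>: "0 < \<eta>" "\<eta> \<le> 1" "\<eta> \<le> e0" using e0 by (auto simp: \<eta>_def)
      define K where "K = 2 * real CARD('d) * t + \<bar>integral {\<eta>..1} (\<lambda>s. 1 / \<rho> s)\<bar> + 1"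
      have "eventually (\<lambda>e. K \<le> integral {e..1} (\<lambda>s. 1 / \<rho> s)) (at_right 0)"
        using osg unfolding filterlim_at_top by blast
      then obtain b0 where b0: "b0 > 0" and
         hb00: "\<forall>y>0. y < b0 \<longrightarrow> K \<le> integral {y..1} (\<lambda>s. 1 / \<rho> s)"
        unfolding eventually_at_right_field by blast
      have hb0: "\<And>y. y > 0 \<Longrightarrow> y < b0 \<Longrightarrow> K \<le> integral {y..1} (\<lambda>s. 1 / \<rho> s)"
        using hb00 by blast
      define a where "a = min b0 \<eta> / 2"
      have a: "0 < a" "a < \<eta>" "a < b0" using b0 \<eta> by (auto simp: a_def)
      have Ka: "K \<le> integral {a..1} (\<lambda>s. 1 / \<rho> s)" using hb0 a by simp
      have ri: "(\<lambda>s. 1 / \<rho> s) integrable_on {a..1}"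
      proof (rule integrable_continuous_real)
        have "continuous_on {a..1} \<rho>" by (rule continuous_on_subset[OF rc]) (use a in auto)
        moreover have "\<forall>x\<in>{a..1}. \<rho> x \<noteq> 0" using rp a by (auto intro!: less_imp_neq[THEN not_sym])
        ultimately show "continuous_on {a..1} (\<lambda>s. 1 / \<rho> s)" by (intro continuous_intros) auto
      qed
      have "integral {a..\<eta>} (\<lambda>s. 1 / \<rho> s) + integral {\<eta>..1} (\<lambda>s. 1 / \<rho> s) = integral {a..1} (\<lambda>s. 1 / \<rho> s)"
        by (rule Henstock_Kurzweil_Integration.integral_combine[OF _ _ ri]) (use a \<eta> in auto)
      hence big: "integral {a..\<eta>} (\<lambda>r. 1 / \<rho> r) > 2 * real CARD('d) * t"
        using Ka unfolding K_def by linarith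
      have ra: "\<rho> a > 0" using rp a by simp
      obtain e1 where e1: "e1 > 0" and
        he1: "\<And>\<epsilon> x. 0 < \<epsilon> \<Longrightarrow> \<epsilon> < e1 \<Longrightarrow> norm x \<le> R + 1 \<Longrightarrow> norm (mollify b \<phi> \<epsilon> x - b x) \<le> \<rho> a"
        using mollify_unif[OF ok bc ra, of "R + 1"] by blast
      show "eventually (\<lambda>\<epsilon>. dist (norm (X \<epsilon> \<omega> t - Y \<omega> t)) 0 < e0) (at_right 0)"
        unfolding eventually_at_right_field
      proof (intro exI[of _ "min e1 1"] conjI allI impI)
        show "(0::real) < min e1 1" using e1 by simp
        fix \<epsilon> :: real assume "0 < \<epsilon>" "\<epsilon> < min e1 1"
        hence e: "\<epsilon> \<in> {0<..<1}" "\<epsilon> < e1" "0 < \<epsilon>" by auto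
        note XFe = XF[OF e(1)]
        define Ie where "Ie = (\<lambda>u. integral {0..u} (\<lambda>r. mollify b \<phi> \<epsilon> (X \<epsilon> \<omega> r)))"
        define J where "J = (\<lambda>u. integral {0..u} (\<lambda>r. b (Y \<omega> r)))"
        have Zeq: "\<And>u. u \<in> {0..t} \<Longrightarrow> X \<epsilon> \<omega> u - Y \<omega> u = Ie u - J u"
          using XFe YF(2) by (simp add: Ie_def J_def)
        have "l1norm (X \<epsilon> \<omega> t - Y \<omega> t) < \<eta>"
        proof (rule core[OF rho Cb t])
          show "continuous_on {0..t} (\<lambda>s. X \<epsilon> \<omega> s - Y \<omega> s)"
          proof (rule continuous_on_eq[of _ "\<lambda>u. Ie u - J u"])
            show "continuous_on {0..t} (\<lambda>u. Ie u - J u)"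
              unfolding Ie_def J_def by (intro continuous_on_diff) (use XFe YF(3) in blast)+
            show "\<And>x. x \<in> {0..t} \<Longrightarrow> Ie x - J x = X \<epsilon> \<omega> x - Y \<omega> x" using Zeq by simp
          qed
          show "X \<epsilon> \<omega> 0 = Y \<omega> 0" using XFe YF(4) by simp
          fix s assume s: "0 \<le> s" "s < t"
          show "((\<lambda>s. X \<epsilon> \<omega> s - Y \<omega> s) has_vector_derivative
                  mollify b \<phi> \<epsilon> (X \<epsilon> \<omega> s) - b (Y \<omega> s)) (at s within {s..t})"
          proof (rule has_vector_derivative_transform[of s])
            show "s \<in> {s..t}" using s by simp
            show "\<And>x. x \<in> {s..t} \<Longrightarrow> X \<epsilon> \<omega> x - Y \<omega> x = Ie x - J x" using Zeq s by simp
            show "((\<lambda>u. Ie u - J u) has_vector_derivative mollify b \<phi> \<epsilon> (X \<epsilon> \<omega> s) - b (Y \<omega> s)) (at s within {s..t})"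
              unfolding Ie_def J_def
              by (rule has_vector_derivative_diff) (use XFe YF(5)[OF s] s in auto)
          qed
        next
          show "0 < a" "a < \<eta>" using a by auto
          show "0 \<le> \<rho> a" "\<rho> a \<le> \<rho> a" using ra by auto
          show "integral {a..\<eta>} (\<lambda>r. 1 / \<rho> r) > 2 * real CARD('d) * t" by (rule big)
          fix s assume s: "s \<in> {0..t}" and lt: "l1norm (X \<epsilon> \<omega> s - Y \<omega> s) < \<eta>"
          have "norm (X \<epsilon> \<omega> s) \<le> norm (Y \<omega> s) + norm (X \<epsilon> \<omega> s - Y \<omega> s)"
            by (metis add.commute diff_add_cancel norm_triangle_ineq)
          also have "\<dots> \<le> R + 1" using YR[OF s] norm_le_l1norm[of "X \<epsilon> \<omega> s - Y \<omega> s"] lt \<eta> by linarith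
          finally show "norm (mollify b \<phi> \<epsilon> (X \<epsilon> \<omega> s) - b (X \<epsilon> \<omega> s)) \<le> \<rho> a"
            using he1 e by blast
        qed
        thus "dist (norm (X \<epsilon> \<omega> t - Y \<omega> t)) 0 < e0"
          using norm_le_l1norm[of "X \<epsilon> \<omega> t - Y \<omega> t"] \<eta> by simp
      qed
    qed
  qed
  show ?thesis using part1 part2 by blast
qed

end
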